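(* Let $\alpha,\beta\in(0,1)$, $\gamma>0$, $m=\alpha n^\beta$, and $\lambda^*=\frac{\gamma}{1-\beta}$. Then for all $\lambda<\lambda^*$, $$\lim_{n\to\infty}\frac{\sum_{1\le j\le\lambda m/\log_2 n}\binom{n}{j}}{2^{\gamma m}}=0.$$ *)

theory Defs
  imports Complex_Main
begin

end

theory Submission imports Defs "HOL-Real_Asymp.Real_Asymp" begin

lemma binom_tail:
  fixes K :: real and n :: nat
  assumes K: "0 < K" "K \<le> real n"
  shows "(\<Sum>j\<in>{j::nat. 1 \<le> j \<and> real j \<le> K}. real (n choose j)) \<le> (exp 1 * n / K) powr K"
proof -
  define x where "x = K / n"
  have n0: "real n > 0" using K by linarith
  have x0: "0 < x" and x1: "x \<le> 1" using K n0 by (auto simp: x_def)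
  define S where "S = {j::nat. 1 \<le> j \<and> real j \<le> K}"
  have Ssub: "S \<subseteq> {..n}" using K by (auto simp: S_def)
  have "(\<Sum>j\<in>S. real (n choose j)) \<le> (\<Sum>j\<in>S. real (n choose j) * x ^ j / x powr K)"
  proof (rule sum_mono)
    fix j assume "j \<in> S"
    hence jK: "real j \<le> K" by (auto simp: S_def)
    have "x powr K \<le> x powr real j" using powr_mono' [OF jK] x0 x1
      by (simp add: powr_mono' less_imp_le)
    hence "x powr K \<le> x ^ j" using x0 by (simp add: powr_realpow)
    hence "1 \<le> x ^ j / x powr K" using x0 by simp
    thus "real (n choose j) \<le> real (n choose j) * x ^ j / x powr K"
      using mult_left_mono[of 1 "x ^ j / x powr K" "real (n choose j)"] by simp
  qed
  also have "\<dots> = (\<Sum>j\<in>S. real (n choose j) * x ^ j) / x powr K"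
    by (simp add: sum_divide_distrib)
  also have "\<dots> \<le> (\<Sum>j\<le>n. real (n choose j) * x ^ j) / x powr K"
    using Ssub x0 by (intro divide_right_mono sum_mono2) auto
  also have "(\<Sum>j\<le>n. real (n choose j) * x ^ j) / x powr K \<le> exp K / x powr K"
  proof (rule divide_right_mono)
    have "(\<Sum>j\<le>n. real (n choose j) * x ^ j) = (1 + x) ^ n"
      using binomial_ring[of x 1 n] by (simp add: add.commute mult.commute)
    also have "(1 + x) ^ n \<le> exp x ^ n"
      using x0 by (intro power_mono) (auto simp: add.commute)
    also have "exp x ^ n = exp K"
      using n0 by (simp add: x_def flip: exp_of_nat_mult)
    finally show "(\<Sum>j\<le>n. real (n choose j) * x ^ j) \<le> exp K" .
  qed (use x0 in simp)
  also have "exp K / x powr K = (exp 1 * n / K) powr K"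
  proof -
    have a: "ln (exp 1 * n / K) = 1 + ln n - ln K" using K n0 by (simp add: ln_div ln_mult)
    have b: "ln (K / n) = ln K - ln n" using K n0 by (simp add: ln_div)
    have "exp K / x powr K = exp (K - K * ln (K / n))"
      using K n0 x0 by (simp add: x_def powr_def exp_diff)
    also have "K - K * ln (K / n) = K * ln (exp 1 * n / K)" unfolding a b by (simp add: algebra_simps)
    finally show ?thesis using K n0 by (simp add: powr_def)
  qed
  finally show ?thesis unfolding S_def .
qed

theorem lemma9:
  fixes \<alpha> \<beta> \<gamma> lam :: real
  assumes "0 < \<alpha>" "\<alpha> < 1" "0 < \<beta>" "\<beta> < 1" "0 < \<gamma>"
    and "lam < \<gamma> / (1 - \<beta>)"
  shows "((\<lambda>n::nat. let m = \<alpha> * real n powr \<beta> in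
            (\<Sum>j\<in>{j::nat. 1 \<le> j \<and> real j \<le> lam * m / log 2 (real n)}. real (n choose j))
              / 2 powr (\<gamma> * m)) \<longlongrightarrow> 0) sequentially"
proof -
  note a = assms
  define l where "l = max lam (\<gamma> / (2 * (1 - \<beta>)))"
  have "0 < \<gamma> / (2 * (1 - \<beta>))" using a by simp
  hence l0: "0 < l" unfolding l_def by linarith
  have lb: "l * (1 - \<beta>) < \<gamma>"
  proof -
    have "l < \<gamma> / (1 - \<beta>)" using a by (auto simp: l_def field_simps)
    thus ?thesis using a by (simp add: field_simps)
  qed
  have laml: "lam \<le> l" by (simp add: l_def)
  define K where "K = (\<lambda>n::nat. l * \<alpha> * real n powr \<beta> / log 2 (real n))"
  define g where "g = (\<lambda>n::nat. exp (K n * ln (exp 1 * real n / K n) - \<gamma> * \<alpha> * real n powr \<beta> * ln 2))"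
  have glim: "g \<longlonglongrightarrow> 0"
    unfolding g_def K_def using a l0 lb by real_asymp
  have Kn: "filterlim (\<lambda>n. real n - K n) at_top sequentially"
    unfolding K_def using a l0 by real_asymp
  have ev: "eventually (\<lambda>n. 2 \<le> n \<and> K n \<le> real n) sequentially"
    using eventually_ge_at_top[of 2] filterlim_at_top[THEN iffD1, OF Kn, rule_format, of 0]
    by eventually_elim simp
  show ?thesis
  proof (rule tendsto_sandwich[OF _ _ tendsto_const glim])
    show "eventually (\<lambda>n. 0 \<le> (let m = \<alpha> * real n powr \<beta> in
            (\<Sum>j\<in>{j::nat. 1 \<le> j \<and> real j \<le> lam * m / log 2 (real n)}. real (n choose j))
              / 2 powr (\<gamma> * m))) sequentially"
      by (auto simp: Let_def intro!: always_eventually sum_nonneg divide_nonneg_nonneg)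
    show "eventually (\<lambda>n. (let m = \<alpha> * real n powr \<beta> in
            (\<Sum>j\<in>{j::nat. 1 \<le> j \<and> real j \<le> lam * m / log 2 (real n)}. real (n choose j))
              / 2 powr (\<gamma> * m)) \<le> g n) sequentially"
      using ev
    proof eventually_elim
      case (elim n)
      hence n2: "2 \<le> n" and Kle: "K n \<le> real n" by auto
      define m where "m = \<alpha> * real n powr \<beta>"
      have m0: "0 < m" using a n2 by (simp add: m_def)
      have L0: "0 < log 2 (real n)" using n2 by simp
      have K0: "0 < K n" using l0 a n2 L0 by (simp add: K_def)
      have Km: "K n = l * m / log 2 (real n)" by (simp add: K_def m_def)
      have sub: "{j::nat. 1 \<le> j \<and> real j \<le> lam * m / log 2 (real n)} \<subseteq> {j::nat. 1 \<le> j \<and> real j \<le> K n}"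
      proof -
        have "lam * m / log 2 (real n) \<le> K n" unfolding Km
          using laml m0 L0 by (intro divide_right_mono mult_right_mono) auto
        thus ?thesis by auto
      qed
      have fin: "finite {j::nat. 1 \<le> j \<and> real j \<le> K n}"
        by (rule finite_subset[of _ "{..n}"]) (use Kle in auto)
      have "(\<Sum>j\<in>{j::nat. 1 \<le> j \<and> real j \<le> lam * m / log 2 (real n)}. real (n choose j))
          \<le> (\<Sum>j\<in>{j::nat. 1 \<le> j \<and> real j \<le> K n}. real (n choose j))"
        by (rule sum_mono2[OF fin sub]) auto
      also have "\<dots> \<le> (exp 1 * n / K n) powr K n" by (rule binom_tail[OF K0 Kle])
      finally have s: "(\<Sum>j\<in>{j::nat. 1 \<le> j \<and> real j \<le> lam * m / log 2 (real n)}. real (n choose j))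
          / 2 powr (\<gamma> * m) \<le> (exp 1 * n / K n) powr K n / 2 powr (\<gamma> * m)"
        by (rule divide_right_mono) simp
      have "(exp 1 * n / K n) powr K n / 2 powr (\<gamma> * m) = g n"
        using K0 n2 by (simp add: g_def powr_def m_def exp_diff mult_ac)
      with s show ?case by (simp add: Let_def m_def)
    qed
  qed
qed

end
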